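(* Assume the action of $H$ on $F$ is open and transitive and that the backward orbits $S_Q^*q$ of $S_Q$ are open for all $q\in Q$. Let $\mathcal C\subset X$ be a control set of $S_X$ and $q\in\pi^{-1}(\mathcal C_0)$. Then for every control set $D\subset E$ of $S_E$ with $D_0\cap E_{\pi(q)}\neq\emptyset$ there is a control set $A^D_q\subset F$ of $S_q$ such that $$D_0\cap E_{\pi(q)}=q\cdot(A^D_q)_0.$$ Furthermore, the map $D\mapsto A^D_q$ is a bijection from the set of control sets $D$ of $S_E$ with $D_0\cap E_{\pi(q)}\neq\emptyset$ onto the set of control sets of $S_q$ on $F$, and it preserves the order: $D\le D'$ if and only if $A^D_q\le A^{D'}_q$.
   Context: Let $X$ be a topological space, $H$ a topological group, $\pi:Q\to X$ a locally trivial principal bundle with structure group $H$ acting on the right ($q\mapsto qa$), and $F$ a topological space with a continuous left $H$-action; the action is open if $Vv$ is open for all open $V\subset H$ and $v\in F$. $E=Q\times_HF$ is the associated bundle (classes $q\cdot v$ with $(qa)\cdot v=q\cdot(av)$), $\pi:E\to X$, and $E_x$ denotes the fiber over $x$. A local map on a space $Y$ is a continuous map $\phi:\mathrm{dom}\,\phi\to Y$ with open domain; a local semigroup is a family of local maps such that $\psi\circ\phi$ (on $\phi^{-1}(\mathrm{dom}\,\psi)$) belongs to it whenever this domain is nonempty. Orbits: $Sy=\{\phi(y):y\in\mathrm{dom}\,\phi,\phi\in S\}$, backward orbits $S^*y=\{z:\exists\phi\in S,\ \phi(z)=y\}$. A point $y$ is self-accessible if $y\in\mathrm{int}(S^*y)$;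 a control set is $D=\{z:z\in\mathrm{cl}(Sy),\ y\in\mathrm{cl}(Sz)\}$ for a self-accessible $y$; its transitivity set $D_0$ is the set of self-accessible points of $D$; $D\le D'$ iff $y'\in Sy$ for some $y\in D_0$, $y'\in D'_0$. A local endomorphism of $Q$ is a continuous $\phi$ with $\mathrm{dom}\,\phi=\pi^{-1}(V)$, $V\subset X$ open, and $\phi(qa)=\phi(q)a$. $S_Q$ is a local semigroup of local endomorphisms of $Q$; it induces local semigroups $S_X=\{\phi_X\}$ on $X$ with $\phi_X(\pi(q))=\pi(\phi(q))$ and $S_E=\{\phi_E\}$ on $E$ with $\phi_E(q\cdot v)=\phi(q)\cdot v$. For $q\in Q$, $S_q=\{a\in H: qa\in S_Qq\}$, a subsemigroup of $H$, acting on $F$. *)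

theory Defs
  imports "HOL-Analysis.Analysis"
begin

definition topological_group ::
  "'h topology \<Rightarrow> ('h \<Rightarrow> 'h \<Rightarrow> 'h) \<Rightarrow> 'h \<Rightarrow> ('h \<Rightarrow> 'h) \<Rightarrow> bool" where
  "topological_group TH m e i \<longleftrightarrow>
     e \<in> topspace TH \<and>
     (\<forall>a\<in>topspace TH. \<forall>b\<in>topspace TH. m a b \<in> topspace TH) \<and>
     (\<forall>a\<in>topspace TH. i a \<in> topspace TH) \<and>
     (\<forall>a\<in>topspace TH. \<forall>b\<in>topspace TH. \<forall>c\<in>topspace TH. m (m a b) c = m a (m b c)) \<and>
     (\<forall>a\<in>topspace TH. m e a = a \<and> m a e = a) \<and>
     (\<forall>a\<in>topspace TH. m a (i a) = e \<and> m (i a) a = e) \<and>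
     continuous_map (prod_topology TH TH) TH (\<lambda>(a, b). m a b) \<and>
     continuous_map TH TH i"

definition continuous_left_action ::
  "'h topology \<Rightarrow> ('h \<Rightarrow> 'h \<Rightarrow> 'h) \<Rightarrow> 'h \<Rightarrow> 'f topology \<Rightarrow> ('h \<Rightarrow> 'f \<Rightarrow> 'f) \<Rightarrow> bool" where
  "continuous_left_action TH m e F la \<longleftrightarrow>
     (\<forall>a\<in>topspace TH. \<forall>v\<in>topspace F. la a v \<in> topspace F) \<and>
     (\<forall>v\<in>topspace F. la e v = v) \<and>
     (\<forall>a\<in>topspace TH. \<forall>b\<in>topspace TH. \<forall>v\<in>topspace F. la (m a b) v = la a (la b v)) \<and>
     continuous_map (prod_topology TH F) F (\<lambda>(a, v). la a v)"

definition open_action :: "'h topology \<Rightarrow> 'f topology \<Rightarrow> ('h \<Rightarrow> 'f \<Rightarrow> 'f) \<Rightarrow> bool" where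
  "open_action TH F la \<longleftrightarrow>
     (\<forall>V v. openin TH V \<and> v \<in> topspace F \<longrightarrow> openin F ((\<lambda>a. la a v) ` V))"

definition transitive_action :: "'h topology \<Rightarrow> 'f topology \<Rightarrow> ('h \<Rightarrow> 'f \<Rightarrow> 'f) \<Rightarrow> bool" where
  "transitive_action TH F la \<longleftrightarrow>
     (\<forall>v\<in>topspace F. \<forall>w\<in>topspace F. \<exists>a\<in>topspace TH. la a v = w)"

definition principal_bundle ::
  "'x topology \<Rightarrow> 'h topology \<Rightarrow> ('h \<Rightarrow> 'h \<Rightarrow> 'h) \<Rightarrow> 'h \<Rightarrow> ('h \<Rightarrow> 'h) \<Rightarrow>
   'q topology \<Rightarrow> ('q \<Rightarrow> 'x) \<Rightarrow> ('q \<Rightarrow> 'h \<Rightarrow> 'q) \<Rightarrow> bool" where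
  "principal_bundle X TH m e i Q \<pi> ra \<longleftrightarrow>
     topological_group TH m e i \<and>
     continuous_map Q X \<pi> \<and> \<pi> ` topspace Q = topspace X \<and>
     (\<forall>q\<in>topspace Q. \<forall>a\<in>topspace TH. ra q a \<in> topspace Q \<and> \<pi> (ra q a) = \<pi> q) \<and>
     (\<forall>q\<in>topspace Q. ra q e = q) \<and>
     (\<forall>q\<in>topspace Q. \<forall>a\<in>topspace TH. \<forall>b\<in>topspace TH. ra q (m a b) = ra (ra q a) b) \<and>
     continuous_map (prod_topology Q TH) Q (\<lambda>(q, a). ra q a) \<and>
     (\<forall>x\<in>topspace X. \<exists>U \<psi>. openin X U \<and> x \<in> U \<and>
        homeomorphic_map (subtopology Q {q \<in> topspace Q. \<pi> q \<in> U})
                         (prod_topology (subtopology X U) TH) \<psi> \<and>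
        (\<forall>q\<in>topspace Q. \<pi> q \<in> U \<longrightarrow> fst (\<psi> q) = \<pi> q \<and>
           (\<forall>a\<in>topspace TH. snd (\<psi> (ra q a)) = m (snd (\<psi> q)) a)))"

text \<open>The class \<open>q\<cdot>v\<close>: all pairs \<open>(q',v')\<close> with \<open>q = q'a\<close>, \<open>v' = av\<close> for some \<open>a \<in> H\<close>
  (so that \<open>(qa)\<cdot>v = q\<cdot>(av)\<close>).\<close>
definition assoc_cls ::
  "'h topology \<Rightarrow> 'q topology \<Rightarrow> ('q \<Rightarrow> 'h \<Rightarrow> 'q) \<Rightarrow> 'f topology \<Rightarrow> ('h \<Rightarrow> 'f \<Rightarrow> 'f) \<Rightarrow>
   'q \<Rightarrow> 'f \<Rightarrow> ('q \<times> 'f) set" where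
  "assoc_cls TH Q ra F la q v =
     {(q', v'). q' \<in> topspace Q \<and> v' \<in> topspace F \<and>
        (\<exists>a\<in>topspace TH. q = ra q' a \<and> v' = la a v)}"

definition assoc_space ::
  "'h topology \<Rightarrow> 'q topology \<Rightarrow> ('q \<Rightarrow> 'h \<Rightarrow> 'q) \<Rightarrow> 'f topology \<Rightarrow> ('h \<Rightarrow> 'f \<Rightarrow> 'f) \<Rightarrow>
   ('q \<times> 'f) set set" where
  "assoc_space TH Q ra F la =
     {assoc_cls TH Q ra F la q v | q v. q \<in> topspace Q \<and> v \<in> topspace F}"

definition assoc_top ::
  "'h topology \<Rightarrow> 'q topology \<Rightarrow> ('q \<Rightarrow> 'h \<Rightarrow> 'q) \<Rightarrow> 'f topology \<Rightarrow> ('h \<Rightarrow> 'f \<Rightarrow> 'f) \<Rightarrow>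
   ('q \<times> 'f) set topology" where
  "assoc_top TH Q ra F la =
     topology (\<lambda>U. U \<subseteq> assoc_space TH Q ra F la \<and>
       openin (prod_topology Q F)
         {p \<in> topspace (prod_topology Q F). assoc_cls TH Q ra F la (fst p) (snd p) \<in> U})"

definition assoc_fiber ::
  "'h topology \<Rightarrow> 'q topology \<Rightarrow> ('q \<Rightarrow> 'x) \<Rightarrow> ('q \<Rightarrow> 'h \<Rightarrow> 'q) \<Rightarrow> 'f topology \<Rightarrow>
   ('h \<Rightarrow> 'f \<Rightarrow> 'f) \<Rightarrow> 'x \<Rightarrow> ('q \<times> 'f) set set" where
  "assoc_fiber TH Q \<pi> ra F la x =
     {assoc_cls TH Q ra F la q' v | q' v. q' \<in> topspace Q \<and> \<pi> q' = x \<and> v \<in> topspace F}"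

definition assoc_image ::
  "'h topology \<Rightarrow> 'q topology \<Rightarrow> ('q \<Rightarrow> 'h \<Rightarrow> 'q) \<Rightarrow> 'f topology \<Rightarrow> ('h \<Rightarrow> 'f \<Rightarrow> 'f) \<Rightarrow>
   'q \<Rightarrow> 'f set \<Rightarrow> ('q \<times> 'f) set set" where
  "assoc_image TH Q ra F la q A = assoc_cls TH Q ra F la q ` A"

definition local_map :: "'a topology \<Rightarrow> ('a \<rightharpoonup> 'a) \<Rightarrow> bool" where
  "local_map Y \<phi> \<longleftrightarrow> openin Y (dom \<phi>) \<and>
     (\<forall>y\<in>dom \<phi>. the (\<phi> y) \<in> topspace Y) \<and>
     continuous_map (subtopology Y (dom \<phi>)) Y (\<lambda>y. the (\<phi> y))"

definition local_semigroup :: "'a topology \<Rightarrow> ('a \<rightharpoonup> 'a) set \<Rightarrow> bool" where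
  "local_semigroup Y S \<longleftrightarrow> (\<forall>\<phi>\<in>S. local_map Y \<phi>) \<and>
     (\<forall>\<phi>\<in>S. \<forall>\<psi>\<in>S. dom (map_comp \<psi> \<phi>) \<noteq> {} \<longrightarrow> map_comp \<psi> \<phi> \<in> S)"

definition orbit :: "('a \<rightharpoonup> 'a) set \<Rightarrow> 'a \<Rightarrow> 'a set" where
  "orbit S y = {the (\<phi> y) | \<phi>. \<phi> \<in> S \<and> y \<in> dom \<phi>}"

definition borbit :: "('a \<rightharpoonup> 'a) set \<Rightarrow> 'a \<Rightarrow> 'a set" where
  "borbit S y = {z. \<exists>\<phi>\<in>S. \<phi> z = Some y}"

definition self_accessible :: "'a topology \<Rightarrow> ('a \<rightharpoonup> 'a) set \<Rightarrow> 'a \<Rightarrow> bool" where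
  "self_accessible Y S y \<longleftrightarrow> y \<in> Y interior_of (borbit S y)"

definition control_set :: "'a topology \<Rightarrow> ('a \<rightharpoonup> 'a) set \<Rightarrow> 'a set \<Rightarrow> bool" where
  "control_set Y S D \<longleftrightarrow> (\<exists>y. self_accessible Y S y \<and>
     D = {z. z \<in> Y closure_of (orbit S y) \<and> y \<in> Y closure_of (orbit S z)})"

definition transitivity_set :: "'a topology \<Rightarrow> ('a \<rightharpoonup> 'a) set \<Rightarrow> 'a set \<Rightarrow> 'a set" where
  "transitivity_set Y S D = {z \<in> D. self_accessible Y S z}"

definition control_le :: "'a topology \<Rightarrow> ('a \<rightharpoonup> 'a) set \<Rightarrow> 'a set \<Rightarrow> 'a set \<Rightarrow> bool" where
  "control_le Y S D D' \<longleftrightarrow>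
     (\<exists>y\<in>transitivity_set Y S D. \<exists>y'\<in>transitivity_set Y S D'. y' \<in> orbit S y)"

definition local_endo ::
  "'x topology \<Rightarrow> 'h topology \<Rightarrow> 'q topology \<Rightarrow> ('q \<Rightarrow> 'x) \<Rightarrow> ('q \<Rightarrow> 'h \<Rightarrow> 'q) \<Rightarrow>
   ('q \<rightharpoonup> 'q) \<Rightarrow> bool" where
  "local_endo X TH Q \<pi> ra \<phi> \<longleftrightarrow>
     (\<exists>V. openin X V \<and> dom \<phi> = {q \<in> topspace Q. \<pi> q \<in> V}) \<and>
     (\<forall>q\<in>dom \<phi>. the (\<phi> q) \<in> topspace Q) \<and>
     continuous_map (subtopology Q (dom \<phi>)) Q (\<lambda>q. the (\<phi> q)) \<and>
     (\<forall>q\<in>dom \<phi>. \<forall>a\<in>topspace TH. \<phi> (ra q a) = Some (ra (the (\<phi> q)) a))"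

definition induced_X :: "('q \<Rightarrow> 'x) \<Rightarrow> ('q \<rightharpoonup> 'q) \<Rightarrow> ('x \<rightharpoonup> 'x)" where
  "induced_X \<pi> \<phi> = (\<lambda>x. if x \<in> \<pi> ` dom \<phi>
      then Some (\<pi> (the (\<phi> (SOME q. q \<in> dom \<phi> \<and> \<pi> q = x)))) else None)"

definition induced_E ::
  "'h topology \<Rightarrow> 'q topology \<Rightarrow> ('q \<Rightarrow> 'h \<Rightarrow> 'q) \<Rightarrow> 'f topology \<Rightarrow> ('h \<Rightarrow> 'f \<Rightarrow> 'f) \<Rightarrow>
   ('q \<rightharpoonup> 'q) \<Rightarrow> (('q \<times> 'f) set \<rightharpoonup> ('q \<times> 'f) set)" where
  "induced_E TH Q ra F la \<phi> = (\<lambda>c.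
     if c \<in> assoc_space TH Q ra F la \<and> (\<exists>p\<in>c. fst p \<in> dom \<phi>)
     then (let p = (SOME p. p \<in> c \<and> fst p \<in> dom \<phi>)
           in Some (assoc_cls TH Q ra F la (the (\<phi> (fst p))) (snd p)))
     else None)"

definition fiber_semigroup ::
  "'h topology \<Rightarrow> ('q \<Rightarrow> 'h \<Rightarrow> 'q) \<Rightarrow> ('q \<rightharpoonup> 'q) set \<Rightarrow> 'q \<Rightarrow> 'h set" where
  "fiber_semigroup TH ra SQ q = {a \<in> topspace TH. ra q a \<in> orbit SQ q}"

text \<open>A subset of H acting on F, viewed as a family of (globally defined) maps of F.\<close>
definition action_maps ::
  "'f topology \<Rightarrow> ('h \<Rightarrow> 'f \<Rightarrow> 'f) \<Rightarrow> 'h set \<Rightarrow> ('f \<rightharpoonup> 'f) set" where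
  "action_maps F la T = (\<lambda>a. (\<lambda>v. if v \<in> topspace F then Some (la a v) else None)) ` T"

end

theory Submission
  imports Defs
begin


definition strans :: "('a \<rightharpoonup> 'a) set \<Rightarrow> bool" where
  "strans S \<longleftrightarrow> (\<forall>\<phi>\<in>S. \<forall>\<psi>\<in>S. \<forall>z u y. \<phi> z = Some u \<longrightarrow> \<psi> u = Some y \<longrightarrow> (\<exists>\<theta>\<in>S. \<theta> z = Some y))"

definition cs :: "'a topology \<Rightarrow> ('a \<rightharpoonup> 'a) set \<Rightarrow> 'a \<Rightarrow> 'a set" where
  "cs Y S y = {z. z \<in> Y closure_of (orbit S y) \<and> y \<in> Y closure_of (orbit S z)}"

lemma orbit_iff: "u \<in> orbit S z \<longleftrightarrow> (\<exists>\<phi>\<in>S. \<phi> z = Some u)"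
proof
  assume "u \<in> orbit S z"
  then show "\<exists>\<phi>\<in>S. \<phi> z = Some u" unfolding orbit_def by (auto simp: dom_def)
next
  assume "\<exists>\<phi>\<in>S. \<phi> z = Some u"
  then obtain \<phi> where "\<phi>\<in>S" "\<phi> z = Some u" by blast
  then have "u = the (\<phi> z) \<and> \<phi> \<in> S \<and> z \<in> dom \<phi>" by auto
  then show "u \<in> orbit S z" unfolding orbit_def mem_Collect_eq by (rule exI[of _ \<phi>])
qed

lemma strans_D: "strans S \<Longrightarrow> \<phi>\<in>S \<Longrightarrow> \<psi>\<in>S \<Longrightarrow> \<phi> z = Some u \<Longrightarrow> \<psi> u = Some y
   \<Longrightarrow> \<exists>\<theta>\<in>S. \<theta> z = Some y"
  unfolding strans_def by blast

lemma orbit_trans: "strans S \<Longrightarrow> u \<in> orbit S z \<Longrightarrow> orbit S u \<subseteq> orbit S z"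
proof
  fix y assume st: "strans S" and u: "u \<in> orbit S z" and y: "y \<in> orbit S u"
  obtain \<phi> where p: "\<phi>\<in>S" "\<phi> z = Some u" using u orbit_iff by metis
  obtain \<psi> where s: "\<psi>\<in>S" "\<psi> u = Some y" using y orbit_iff by metis
  show "y \<in> orbit S z" using strans_D[OF st p(1) s(1) p(2) s(2)] orbit_iff by metis
qed

lemma mem_clos: "x \<in> topspace Y \<Longrightarrow> x \<in> A \<Longrightarrow> x \<in> Y closure_of A"
  by (meson IntI closure_of_subset_Int subsetD)

lemma sa_top: "self_accessible Y S y \<Longrightarrow> y \<in> topspace Y"
  unfolding self_accessible_def by (meson subsetD interior_of_subset_topspace)

lemma sa_orbit: "self_accessible Y S y \<Longrightarrow> y \<in> orbit S y"
proof -
  assume "self_accessible Y S y"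
  then have "y \<in> borbit S y" unfolding self_accessible_def using subsetD[OF interior_of_subset] by metis
  then show ?thesis by (auto simp: borbit_def orbit_iff)
qed

lemma G1:
  assumes st: "strans S" and sa: "self_accessible Y S y" and cl: "y \<in> Y closure_of orbit S z"
  shows "y \<in> orbit S z"
proof -
  have i1: "y \<in> Y interior_of borbit S y \<and> openin Y (Y interior_of borbit S y)"
    using sa unfolding self_accessible_def by simp
  have i2: "\<forall>T. y \<in> T \<and> openin Y T \<longrightarrow> (\<exists>u. u \<in> orbit S z \<and> u \<in> T)"
    using cl by (simp add: in_closure_of)
  have "\<exists>u. u \<in> orbit S z \<and> u \<in> Y interior_of borbit S y"
    using mp[OF spec[OF i2, of "Y interior_of borbit S y"] i1] .
  then obtain u where u: "u \<in> orbit S z" "u \<in> Y interior_of borbit S y"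
    by (elim exE conjE)
  have "u \<in> borbit S y" using subsetD[OF interior_of_subset u(2)] .
  then obtain \<psi> where s: "\<psi>\<in>S" "\<psi> u = Some y" by (auto simp: borbit_def)
  obtain \<phi> where p: "\<phi>\<in>S" "\<phi> z = Some u" using u orbit_iff by metis
  show ?thesis using strans_D[OF st p(1) s(1) p(2) s(2)] orbit_iff by metis
qed

lemma G0: "self_accessible Y S y \<Longrightarrow> y \<in> cs Y S y"
  unfolding cs_def using sa_top sa_orbit mem_clos by fastforce

lemma G2:
  assumes st: "strans S" and sy: "self_accessible Y S y0" and sz: "self_accessible Y S z"
    and z: "z \<in> cs Y S y0"
  shows "cs Y S z = cs Y S y0"
proof -
  have a: "z \<in> orbit S y0" using G1[OF st sz] z unfolding cs_def by blast
  have b: "y0 \<in> orbit S z" using G1[OF st sy] z unfolding cs_def by blast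
  have eq: "orbit S z = orbit S y0" using orbit_trans[OF st a] orbit_trans[OF st b] by blast
  have "z \<in> Y closure_of orbit S w \<longleftrightarrow> y0 \<in> Y closure_of orbit S w" for w
  proof
    assume "z \<in> Y closure_of orbit S w"
    then have "z \<in> orbit S w" using G1[OF st sz] by blast
    then have "y0 \<in> orbit S w" using orbit_trans[OF st] b by blast
    then show "y0 \<in> Y closure_of orbit S w" using mem_clos sa_top[OF sy] by metis
  next
    assume "y0 \<in> Y closure_of orbit S w"
    then have "y0 \<in> orbit S w" using G1[OF st sy] by blast
    then have "z \<in> orbit S w" using orbit_trans[OF st] a by blast
    then show "z \<in> Y closure_of orbit S w" using mem_clos sa_top[OF sz] by metis
  qed
  then show ?thesis unfolding cs_def eq by blast
qed

lemma control_set_cs: "control_set Y S D \<longleftrightarrow> (\<exists>y. self_accessible Y S y \<and> D = cs Y S y)"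
  unfolding control_set_def cs_def by simp

lemma G2':
  assumes st: "strans S" and D: "control_set Y S D" and z: "z \<in> transitivity_set Y S D"
  shows "D = cs Y S z"
proof -
  obtain y where y: "self_accessible Y S y" "D = cs Y S y" using D control_set_cs by metis
  have "z \<in> D" "self_accessible Y S z" using z unfolding transitivity_set_def by auto
  then show ?thesis using G2[OF st y(1)] y(2) by simp
qed

lemma G3:
  assumes st: "strans S" and D: "control_set Y S D"
    and z1: "z1 \<in> transitivity_set Y S D" and z2: "z2 \<in> transitivity_set Y S D"
  shows "z2 \<in> orbit S z1"
proof -
  have "D = cs Y S z1" using G2'[OF st D z1] .
  moreover have "z2 \<in> D" "self_accessible Y S z2"
    using z2 unfolding transitivity_set_def by auto
  ultimately have "z2 \<in> Y closure_of orbit S z1" "self_accessible Y S z2"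
    unfolding cs_def by auto
  then show ?thesis using G1[OF st] by blast
qed

lemma cs_ts: "self_accessible Y S y \<Longrightarrow> y \<in> transitivity_set Y S (cs Y S y)"
  unfolding transitivity_set_def using G0[of Y S y] by blast




locale bsetup =
  fixes X :: "'x topology" and TH :: "'h topology"
    and m :: "'h \<Rightarrow> 'h \<Rightarrow> 'h" and e :: 'h and i :: "'h \<Rightarrow> 'h"
    and Q :: "'q topology" and \<pi> :: "'q \<Rightarrow> 'x" and ra :: "'q \<Rightarrow> 'h \<Rightarrow> 'q"
    and F :: "'f topology" and la :: "'h \<Rightarrow> 'f \<Rightarrow> 'f"
    and SQ :: "('q \<rightharpoonup> 'q) set" and q :: 'q
  assumes princ: "principal_bundle X TH m e i Q \<pi> ra"
    and action: "continuous_left_action TH m e F la"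
    and SQ_semigroup: "local_semigroup Q SQ"
    and SQ_endo: "\<forall>\<phi>\<in>SQ. local_endo X TH Q \<pi> ra \<phi>"
    and open_borbits: "\<forall>p\<in>topspace Q. openin Q (borbit SQ p)"
    and q_Q: "q \<in> topspace Q"
begin

abbreviation "cls \<equiv> assoc_cls TH Q ra F la"

lemma grp: "topological_group TH m e i" using princ by (simp add: principal_bundle_def)

lemma mH: "a \<in> topspace TH \<Longrightarrow> b \<in> topspace TH \<Longrightarrow> m a b \<in> topspace TH"
  using grp by (simp add: topological_group_def)
lemma iH: "a \<in> topspace TH \<Longrightarrow> i a \<in> topspace TH"
  using grp by (simp add: topological_group_def)
lemma eH: "e \<in> topspace TH"
  using grp by (simp add: topological_group_def)
lemma invR: "a \<in> topspace TH \<Longrightarrow> m a (i a) = e"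
  using grp by (simp add: topological_group_def)
lemma invL: "a \<in> topspace TH \<Longrightarrow> m (i a) a = e"
  using grp by (simp add: topological_group_def)

lemma raQ: "p \<in> topspace Q \<Longrightarrow> a \<in> topspace TH \<Longrightarrow> ra p a \<in> topspace Q"
  using princ by (simp add: principal_bundle_def)
lemma pi_ra: "p \<in> topspace Q \<Longrightarrow> a \<in> topspace TH \<Longrightarrow> \<pi> (ra p a) = \<pi> p"
  using princ by (simp add: principal_bundle_def)
lemma ra_e: "p \<in> topspace Q \<Longrightarrow> ra p e = p"
  using princ by (simp add: principal_bundle_def)
lemma ra_m: "p \<in> topspace Q \<Longrightarrow> a \<in> topspace TH \<Longrightarrow> b \<in> topspace TH \<Longrightarrow> ra p (m a b) = ra (ra p a) b"
  using princ by (simp add: principal_bundle_def)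
lemma ra_cont: "continuous_map (prod_topology Q TH) Q (\<lambda>(p, a). ra p a)"
  using princ by (simp add: principal_bundle_def)

lemma laF: "a \<in> topspace TH \<Longrightarrow> v \<in> topspace F \<Longrightarrow> la a v \<in> topspace F"
  using action by (simp add: continuous_left_action_def)
lemma la_e: "v \<in> topspace F \<Longrightarrow> la e v = v"
  using action by (simp add: continuous_left_action_def)
lemma la_m: "a \<in> topspace TH \<Longrightarrow> b \<in> topspace TH \<Longrightarrow> v \<in> topspace F \<Longrightarrow> la (m a b) v = la a (la b v)"
  using action by (simp add: continuous_left_action_def)
lemma la_cont: "continuous_map (prod_topology TH F) F (\<lambda>(a, v). la a v)"
  using action by (simp add: continuous_left_action_def)

lemma ra_inv: "p \<in> topspace Q \<Longrightarrow> a \<in> topspace TH \<Longrightarrow> ra (ra p a) (i a) = p"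
  by (metis ra_m iH invR ra_e)
lemma ra_inv': "p \<in> topspace Q \<Longrightarrow> a \<in> topspace TH \<Longrightarrow> ra (ra p (i a)) a = p"
  by (metis ra_m iH invL ra_e)
lemma la_inv: "v \<in> topspace F \<Longrightarrow> a \<in> topspace TH \<Longrightarrow> la (i a) (la a v) = v"
  by (metis la_m iH invL la_e)
lemma la_inv': "v \<in> topspace F \<Longrightarrow> a \<in> topspace TH \<Longrightarrow> la a (la (i a) v) = v"
  by (metis la_m iH invR la_e)

lemma cls_mem: "(p', v') \<in> cls p v \<longleftrightarrow> p' \<in> topspace Q \<and> v' \<in> topspace F \<and>
   (\<exists>a\<in>topspace TH. p = ra p' a \<and> v' = la a v)"
  by (simp add: assoc_cls_def)

lemma cls_self: "p \<in> topspace Q \<Longrightarrow> v \<in> topspace F \<Longrightarrow> (p, v) \<in> cls p v"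
  unfolding cls_mem using eH ra_e la_e by metis

lemma cls_eq:
  assumes "q1 \<in> topspace Q" "q2 \<in> topspace Q" "v1 \<in> topspace F" "v2 \<in> topspace F"
  shows "cls q1 v1 = cls q2 v2 \<longleftrightarrow> (\<exists>a\<in>topspace TH. q1 = ra q2 a \<and> v2 = la a v1)"
proof
  assume "cls q1 v1 = cls q2 v2"
  then have "(q2, v2) \<in> cls q1 v1" using cls_self assms by metis
  then show "\<exists>a\<in>topspace TH. q1 = ra q2 a \<and> v2 = la a v1" unfolding cls_mem by blast
next
  assume "\<exists>a\<in>topspace TH. q1 = ra q2 a \<and> v2 = la a v1"
  then obtain a where a: "a \<in> topspace TH" "q1 = ra q2 a" "v2 = la a v1" by blast
  show "cls q1 v1 = cls q2 v2"
  proof (rule set_eqI)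
    fix pv :: "'q \<times> 'f"
    obtain p' v' where pv: "pv = (p', v')" by fastforce
    have "(p', v') \<in> cls q1 v1 \<longleftrightarrow> (p', v') \<in> cls q2 v2"
    proof
      assume "(p', v') \<in> cls q1 v1"
      then obtain b where b: "p' \<in> topspace Q" "v' \<in> topspace F" "b \<in> topspace TH"
        "q1 = ra p' b" "v' = la b v1" unfolding cls_mem by blast
      have "q2 = ra (ra q2 a) (i a)" using ra_inv[OF assms(2) a(1)] by simp
      also have "\<dots> = ra (ra p' b) (i a)" using a b by simp
      also have "\<dots> = ra p' (m b (i a))" using ra_m[OF b(1) b(3) iH[OF a(1)]] by simp
      finally have 1: "q2 = ra p' (m b (i a))" .
      have "la (m b (i a)) v2 = la b (la (i a) v2)" using la_m[OF b(3) iH[OF a(1)] assms(4)] .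
      also have "\<dots> = la b v1" using la_inv[OF assms(3) a(1)] a(3) by simp
      finally have "v' = la (m b (i a)) v2" using b by simp
      with 1 show "(p', v') \<in> cls q2 v2" unfolding cls_mem using b a mH iH by blast
    next
      assume "(p', v') \<in> cls q2 v2"
      then obtain b where b: "p' \<in> topspace Q" "v' \<in> topspace F" "b \<in> topspace TH"
        "q2 = ra p' b" "v' = la b v2" unfolding cls_mem by blast
      have "q1 = ra p' (m b a)"
        using a b ra_m[OF b(1) b(3) a(1)] by simp
      moreover have "v' = la (m b a) v1"
        using a b la_m[OF b(3) a(1) assms(3)] by simp
      ultimately show "(p', v') \<in> cls q1 v1" unfolding cls_mem using b a mH by blast
    qed
    then show "pv \<in> cls q1 v1 \<longleftrightarrow> pv \<in> cls q2 v2" using pv by simp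
  qed
qed

lemma cls_shift: "p \<in> topspace Q \<Longrightarrow> a \<in> topspace TH \<Longrightarrow> v \<in> topspace F \<Longrightarrow>
  cls (ra p a) v = cls p (la a v)"
  using cls_eq raQ laF by metis

end



context bsetup begin

lemma fiber_orbit:
  assumes p: "p \<in> topspace Q" and p': "p' \<in> topspace Q" and eq: "\<pi> p' = \<pi> p"
  shows "\<exists>a\<in>topspace TH. p' = ra p a"
proof -
  have im: "\<pi> ` topspace Q = topspace X" using princ by (simp add: principal_bundle_def)
  have "\<pi> p \<in> topspace X" using imageI[OF p, of \<pi>] unfolding im .
  moreover have loc: "\<forall>x\<in>topspace X. \<exists>U \<psi>. openin X U \<and> x \<in> U \<and>
        homeomorphic_map (subtopology Q {q \<in> topspace Q. \<pi> q \<in> U})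
                         (prod_topology (subtopology X U) TH) \<psi> \<and>
        (\<forall>q\<in>topspace Q. \<pi> q \<in> U \<longrightarrow> fst (\<psi> q) = \<pi> q \<and>
           (\<forall>a\<in>topspace TH. snd (\<psi> (ra q a)) = m (snd (\<psi> q)) a))"
    using princ unfolding principal_bundle_def by (elim conjE)
  ultimately have "\<exists>U \<psi>. openin X U \<and> \<pi> p \<in> U \<and>
        homeomorphic_map (subtopology Q {q \<in> topspace Q. \<pi> q \<in> U})
                         (prod_topology (subtopology X U) TH) \<psi> \<and>
        (\<forall>q\<in>topspace Q. \<pi> q \<in> U \<longrightarrow> fst (\<psi> q) = \<pi> q \<and>
           (\<forall>a\<in>topspace TH. snd (\<psi> (ra q a)) = m (snd (\<psi> q)) a))"
    by (rule bspec[rotated])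
  then obtain U \<psi> where U: "openin X U" "\<pi> p \<in> U"
    and hom: "homeomorphic_map (subtopology Q {q \<in> topspace Q. \<pi> q \<in> U})
                         (prod_topology (subtopology X U) TH) \<psi>"
    and prp: "\<forall>q\<in>topspace Q. \<pi> q \<in> U \<longrightarrow> fst (\<psi> q) = \<pi> q \<and>
           (\<forall>a\<in>topspace TH. snd (\<psi> (ra q a)) = m (snd (\<psi> q)) a)"
    by (elim exE conjE)
  have tsI: "topspace Q \<inter> {q \<in> topspace Q. \<pi> q \<in> U} = {q \<in> topspace Q. \<pi> q \<in> U}" by auto
  have inj: "inj_on \<psi> {q \<in> topspace Q. \<pi> q \<in> U}"
    using homeomorphic_imp_injective_map[OF hom] unfolding topspace_subtopology tsI .
  have into: "\<psi> ` {q \<in> topspace Q. \<pi> q \<in> U} = (topspace X \<inter> U) \<times> topspace TH"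
    using homeomorphic_imp_surjective_map[OF hom] unfolding topspace_subtopology tsI topspace_prod_topology .
  have pU: "p \<in> {q \<in> topspace Q. \<pi> q \<in> U}" using p U by simp
  have p'U: "p' \<in> {q \<in> topspace Q. \<pi> q \<in> U}" using p' U eq by simp
  define g where "g = snd (\<psi> p)"
  define g' where "g' = snd (\<psi> p')"
  have "\<psi> p \<in> (topspace X \<inter> U) \<times> topspace TH" using imageI[OF pU, of \<psi>] unfolding into .
  then have gH: "g \<in> topspace TH" unfolding g_def mem_Times_iff by (elim conjE)
  have "\<psi> p' \<in> (topspace X \<inter> U) \<times> topspace TH" using imageI[OF p'U, of \<psi>] unfolding into .
  then have g'H: "g' \<in> topspace TH" unfolding g'_def mem_Times_iff by (elim conjE)
  define a where "a = m (i g) g'"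
  have aH: "a \<in> topspace TH" unfolding a_def using mH iH gH g'H by blast
  have raU: "ra p a \<in> {q \<in> topspace Q. \<pi> q \<in> U}" using raQ[OF p aH] pi_ra[OF p aH] U by simp
  have "fst (\<psi> (ra p a)) = \<pi> p'" using prp raQ[OF p aH] pi_ra[OF p aH] U eq by simp
  moreover have "snd (\<psi> (ra p a)) = g'"
  proof -
    have "snd (\<psi> (ra p a)) = m g a" using prp p U aH unfolding g_def by simp
    also have "\<dots> = m (m g (i g)) g'" unfolding a_def
      using grp gH g'H iH unfolding topological_group_def by metis
    also have "\<dots> = g'" using invR[OF gH] grp g'H unfolding topological_group_def by metis
    finally show ?thesis .
  qed
  ultimately have "\<psi> (ra p a) = \<psi> p'" using prp p' p'U unfolding g'_def
    by (metis (no_types, lifting) mem_Collect_eq prod.collapse)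
  then have "ra p a = p'" using inj raU p'U unfolding inj_on_def by blast
  then show ?thesis using aH by metis
qed

context
  fixes \<phi> assumes le: "local_endo X TH Q \<pi> ra \<phi>"
begin

lemma dom_Q: "p \<in> dom \<phi> \<Longrightarrow> p \<in> topspace Q"
  using le unfolding local_endo_def by blast

lemma dom_inv: "p \<in> topspace Q \<Longrightarrow> a \<in> topspace TH \<Longrightarrow> ra p a \<in> dom \<phi> \<longleftrightarrow> p \<in> dom \<phi>"
proof -
  assume p: "p \<in> topspace Q" and a: "a \<in> topspace TH"
  obtain V where "dom \<phi> = {q \<in> topspace Q. \<pi> q \<in> V}" using le unfolding local_endo_def by blast
  then show ?thesis using raQ[OF p a] pi_ra[OF p a] p by simp
qed

lemma the_Q: "p \<in> dom \<phi> \<Longrightarrow> the (\<phi> p) \<in> topspace Q"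
  using le unfolding local_endo_def by blast

lemma equiv: "p \<in> dom \<phi> \<Longrightarrow> a \<in> topspace TH \<Longrightarrow> \<phi> (ra p a) = Some (ra (the (\<phi> p)) a)"
  using le unfolding local_endo_def by blast

lemma indE1:
  assumes p: "p \<in> dom \<phi>" and w: "w \<in> topspace F"
  shows "induced_E TH Q ra F la \<phi> (cls p w) = Some (cls (the (\<phi> p)) w)"
proof -
  have pQ: "p \<in> topspace Q" using dom_Q p .
  have c: "cls p w \<in> assoc_space TH Q ra F la" unfolding assoc_space_def using pQ w by blast
  have ex: "\<exists>pp\<in>cls p w. fst pp \<in> dom \<phi>" using cls_self[OF pQ w] p by force
  define pp where "pp = (SOME pp. pp \<in> cls p w \<and> fst pp \<in> dom \<phi>)"
  have pp: "pp \<in> cls p w \<and> fst pp \<in> dom \<phi>" unfolding pp_def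
    using someI_ex[of "\<lambda>pp. pp \<in> cls p w \<and> fst pp \<in> dom \<phi>"] ex by blast
  obtain p0 w0 where pp0: "pp = (p0, w0)" by fastforce
  obtain a where a: "p0 \<in> topspace Q" "w0 \<in> topspace F" "a \<in> topspace TH" "p = ra p0 a" "w0 = la a w"
    using pp unfolding pp0 cls_mem by blast
  have p0d: "p0 \<in> dom \<phi>" using pp pp0 by simp
  have "the (\<phi> p) = ra (the (\<phi> p0)) a" using equiv[OF p0d a(3)] a(4) by simp
  then have "cls (the (\<phi> p)) w = cls (the (\<phi> p0)) w0"
    using cls_shift[OF the_Q[OF p0d] a(3) w] a(5) by simp
  moreover have "induced_E TH Q ra F la \<phi> (cls p w) = Some (cls (the (\<phi> (fst pp))) (snd pp))"
    unfolding induced_E_def using c ex pp_def by (simp add: Let_def)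
  ultimately show ?thesis using pp0 by simp
qed

lemma indE2:
  assumes p: "p \<in> topspace Q" and w: "w \<in> topspace F"
    and y: "induced_E TH Q ra F la \<phi> (cls p w) = Some y"
  shows "p \<in> dom \<phi> \<and> y = cls (the (\<phi> p)) w"
proof -
  have "\<exists>pp\<in>cls p w. fst pp \<in> dom \<phi>"
  proof (rule ccontr)
    assume "\<not> ?thesis"
    then have "induced_E TH Q ra F la \<phi> (cls p w) = None" unfolding induced_E_def by simp
    then show False using y by simp
  qed
  then obtain p0 w0 where "(p0, w0) \<in> cls p w" "p0 \<in> dom \<phi>" by fastforce
  then obtain a where a: "p0 \<in> topspace Q" "a \<in> topspace TH" "p = ra p0 a"
    unfolding cls_mem by blast
  have pd: "p \<in> dom \<phi>" using dom_inv[OF a(1) a(2)] a(3) \<open>p0 \<in> dom \<phi>\<close> by simp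
  then show ?thesis using indE1[OF pd w] y by simp
qed

end

lemma indE3: "induced_E TH Q ra F la \<phi> z = Some y \<Longrightarrow>
   \<exists>p w. p \<in> topspace Q \<and> w \<in> topspace F \<and> z = cls p w"
proof -
  assume y: "induced_E TH Q ra F la \<phi> z = Some y"
  have "z \<in> assoc_space TH Q ra F la"
  proof (rule ccontr)
    assume "z \<notin> assoc_space TH Q ra F la"
    then have "induced_E TH Q ra F la \<phi> z = None" unfolding induced_E_def by simp
    then show False using y by simp
  qed
  then show ?thesis unfolding assoc_space_def by blast
qed

end



context bsetup begin

abbreviation "fs \<equiv> fiber_semigroup TH ra SQ q"
abbreviation "Sq \<equiv> action_maps F la fs"
abbreviation "SE \<equiv> induced_E TH Q ra F la ` SQ"
abbreviation "amap a \<equiv> (\<lambda>v. if v \<in> topspace F then Some (la a v) else None)"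

lemma SQ_le: "\<phi> \<in> SQ \<Longrightarrow> local_endo X TH Q \<pi> ra \<phi>"
  using SQ_endo by blast

lemma comp_SQ:
  assumes "\<phi> \<in> SQ" "\<psi> \<in> SQ" "\<phi> p = Some u" "\<psi> u = Some y"
  shows "map_comp \<psi> \<phi> \<in> SQ \<and> map_comp \<psi> \<phi> p = Some y"
proof -
  have c: "map_comp \<psi> \<phi> p = Some y" using assms by (simp add: map_comp_def)
  then have "dom (map_comp \<psi> \<phi>) \<noteq> {}" by blast
  then have "map_comp \<psi> \<phi> \<in> SQ" using SQ_semigroup assms(1,2) unfolding local_semigroup_def by blast
  then show ?thesis using c by simp
qed

lemma fs_iff: "a \<in> fs \<longleftrightarrow> a \<in> topspace TH \<and> (\<exists>\<phi>\<in>SQ. \<phi> q = Some (ra q a))"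
  unfolding fiber_semigroup_def orbit_iff by simp

lemma Sq_iff: "f \<in> Sq \<longleftrightarrow> (\<exists>a\<in>fs. f = amap a)"
  unfolding action_maps_def by blast

lemma fs_H: "a \<in> fs \<Longrightarrow> a \<in> topspace TH" using fs_iff by blast

lemma fs_mult:
  assumes a: "a \<in> fs" and b: "b \<in> fs" shows "m b a \<in> fs"
proof -
  obtain \<phi> where p: "\<phi> \<in> SQ" "\<phi> q = Some (ra q a)" using a fs_iff by blast
  obtain \<psi> where s: "\<psi> \<in> SQ" "\<psi> q = Some (ra q b)" using b fs_iff by blast
  have aH: "a \<in> topspace TH" and bH: "b \<in> topspace TH" using a b fs_H by auto
  have qd: "q \<in> dom \<psi>" using s by blast
  have "\<psi> (ra q a) = Some (ra (the (\<psi> q)) a)" using equiv[OF SQ_le[OF s(1)] qd aH] .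
  also have "\<dots> = Some (ra q (m b a))" using s ra_m[OF q_Q bH aH] by simp
  finally have "map_comp \<psi> \<phi> \<in> SQ \<and> map_comp \<psi> \<phi> q = Some (ra q (m b a))"
    using comp_SQ[OF p(1) s(1) p(2)] by blast
  then show ?thesis using fs_iff mH[OF bH aH] by blast
qed

lemma strans_Sq: "strans Sq"
  unfolding strans_def
proof (intro ballI allI impI)
  fix f g z u y
  assume f: "f \<in> Sq" and g: "g \<in> Sq" and fz: "f z = Some u" and gu: "g u = Some y"
  obtain a where a: "a \<in> fs" "f = amap a" using f Sq_iff by blast
  obtain b where b: "b \<in> fs" "g = amap b" using g Sq_iff by blast
  have z: "z \<in> topspace F" "u = la a z" using fz a(2) by (auto split: if_splits)
  have u: "u \<in> topspace F" "y = la b u" using gu b(2) by (auto split: if_splits)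
  have "amap (m b a) \<in> Sq" using Sq_iff fs_mult[OF a(1) b(1)] by blast
  moreover have "amap (m b a) z = Some y"
    using z u la_m[OF fs_H[OF b(1)] fs_H[OF a(1)] z(1)] by simp
  ultimately show "\<exists>\<theta>\<in>Sq. \<theta> z = Some y" by (intro bexI[where x="amap (m b a)"]) simp_all
qed

lemma strans_SE: "strans SE"
  unfolding strans_def
proof (intro ballI allI impI)
  fix fE gE z u y
  assume f: "fE \<in> SE" and g: "gE \<in> SE" and fz: "fE z = Some u" and gu: "gE u = Some y"
  obtain \<phi> where p: "\<phi> \<in> SQ" "fE = induced_E TH Q ra F la \<phi>" using f by blast
  obtain \<psi> where s: "\<psi> \<in> SQ" "gE = induced_E TH Q ra F la \<psi>" using g by blast
  obtain pp w where pw: "pp \<in> topspace Q" "w \<in> topspace F" "z = cls pp w"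
    using indE3 fz p(2) by metis
  have 1: "pp \<in> dom \<phi> \<and> u = cls (the (\<phi> pp)) w"
    using indE2[OF SQ_le[OF p(1)] pw(1) pw(2)] fz p(2) pw(3) by simp
  have tq: "the (\<phi> pp) \<in> topspace Q" using the_Q[OF SQ_le[OF p(1)]] 1 by blast
  have 2: "the (\<phi> pp) \<in> dom \<psi> \<and> y = cls (the (\<psi> (the (\<phi> pp)))) w"
    using indE2[OF SQ_le[OF s(1)] tq pw(2)] gu s(2) 1 by simp
  have pe: "\<phi> pp = Some (the (\<phi> pp))" using 1 by auto
  have se: "\<psi> (the (\<phi> pp)) = Some (the (\<psi> (the (\<phi> pp))))" using 2 by auto
  have c: "map_comp \<psi> \<phi> \<in> SQ \<and> map_comp \<psi> \<phi> pp = Some (the (\<psi> (the (\<phi> pp))))"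
    using comp_SQ[OF p(1) s(1) pe se] .
  then have pd: "pp \<in> dom (map_comp \<psi> \<phi>)" by blast
  have "induced_E TH Q ra F la (map_comp \<psi> \<phi>) z = Some y"
    using indE1[OF SQ_le pd pw(2)] c 2 pw(3) by simp
  then show "\<exists>\<theta>\<in>SE. \<theta> z = Some y" using c by blast
qed

lemma C1:
  assumes p: "\<phi> \<in> SQ" and v: "v \<in> topspace F" and w: "w \<in> topspace F"
    and h: "induced_E TH Q ra F la \<phi> (cls q v) = Some (cls q w)"
  shows "\<exists>a\<in>fs. w = la a v"
proof -
  have 1: "q \<in> dom \<phi>" "cls q w = cls (the (\<phi> q)) v"
    using indE2[OF SQ_le[OF p] q_Q v h] by auto
  have tq: "the (\<phi> q) \<in> topspace Q" using the_Q[OF SQ_le[OF p] 1(1)] .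
  obtain a where a: "a \<in> topspace TH" "the (\<phi> q) = ra q a" "w = la a v"
    using cls_eq[OF tq q_Q v w] 1(2) by metis
  have "\<phi> q = Some (ra q a)" using 1(1) a(2) by auto
  then have "a \<in> fs" using fs_iff a(1) p by blast
  then show ?thesis using a(3) by blast
qed

lemma C2:
  assumes a: "a \<in> fs" and v: "v \<in> topspace F"
  shows "\<exists>\<phi>\<in>SQ. induced_E TH Q ra F la \<phi> (cls q v) = Some (cls q (la a v))"
proof -
  obtain \<phi> where p: "\<phi> \<in> SQ" "\<phi> q = Some (ra q a)" using a fs_iff by blast
  have qd: "q \<in> dom \<phi>" using p by blast
  have "induced_E TH Q ra F la \<phi> (cls q v) = Some (cls (ra q a) v)"
    using indE1[OF SQ_le[OF p(1)] qd v] p(2) by simp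
  also have "\<dots> = Some (cls q (la a v))" using cls_shift[OF q_Q fs_H[OF a] v] by simp
  finally show ?thesis using p(1) by blast
qed

lemma R:
  assumes v: "v \<in> topspace F" and w: "w \<in> topspace F"
  shows "cls q w \<in> orbit SE (cls q v) \<longleftrightarrow> w \<in> orbit Sq v"
proof
  assume "cls q w \<in> orbit SE (cls q v)"
  then obtain fE where "fE \<in> SE" "fE (cls q v) = Some (cls q w)" using orbit_iff by metis
  then obtain \<phi> where "\<phi> \<in> SQ" "induced_E TH Q ra F la \<phi> (cls q v) = Some (cls q w)" by blast
  then obtain a where a: "a \<in> fs" "w = la a v" using C1 v w by metis
  have "amap a \<in> Sq" using Sq_iff a(1) by blast
  moreover have "amap a v = Some w" using a v by simp
  ultimately show "w \<in> orbit Sq v" unfolding orbit_iff by (intro bexI[where x="amap a"]) simp_all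
next
  assume "w \<in> orbit Sq v"
  then obtain f where "f \<in> Sq" "f v = Some w" using orbit_iff by metis
  then obtain a where a: "a \<in> fs" "amap a v = Some w" using Sq_iff by metis
  then have "w = la a v" using v by simp
  then obtain \<phi> where "\<phi> \<in> SQ" "induced_E TH Q ra F la \<phi> (cls q v) = Some (cls q w)"
    using C2[OF a(1) v] by metis
  then show "cls q w \<in> orbit SE (cls q v)" unfolding orbit_iff
    by (intro bexI[where x="induced_E TH Q ra F la \<phi>"]) simp_all
qed

lemma Bo:
  assumes v: "v \<in> topspace F" and w: "w \<in> topspace F"
    and h: "cls q w \<in> borbit SE (cls q v)"
  shows "w \<in> borbit Sq v"
proof -
  obtain fE where "fE \<in> SE" "fE (cls q w) = Some (cls q v)" using h unfolding borbit_def by blast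
  then obtain \<phi> where "\<phi> \<in> SQ" "induced_E TH Q ra F la \<phi> (cls q w) = Some (cls q v)" by blast
  then obtain a where a: "a \<in> fs" "v = la a w" using C1 v w by metis
  have "amap a \<in> Sq" using Sq_iff a(1) by blast
  moreover have "amap a w = Some v" using a w by simp
  ultimately show ?thesis unfolding borbit_def mem_Collect_eq by (intro bexI[where x="amap a"]) simp_all
qed

end



context bsetup begin

abbreviation "AS \<equiv> assoc_space TH Q ra F la"
abbreviation "E \<equiv> assoc_top TH Q ra F la"
abbreviation "pre U \<equiv> {p \<in> topspace (prod_topology Q F). cls (fst p) (snd p) \<in> U}"

lemma pre_Int: "pre (S \<inter> T) = pre S \<inter> pre T" by blast
lemma pre_Union: "pre (\<Union>K) = \<Union>((\<lambda>S. pre S) ` K)" by blast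

lemma istoA: "S \<subseteq> AS \<and> openin (prod_topology Q F) (pre S) \<Longrightarrow> T \<subseteq> AS \<and> openin (prod_topology Q F) (pre T)
   \<Longrightarrow> S \<inter> T \<subseteq> AS \<and> openin (prod_topology Q F) (pre (S \<inter> T))"
  unfolding pre_Int by (intro conjI openin_Int) auto

lemma istoB: "\<forall>S\<in>K. S \<subseteq> AS \<and> openin (prod_topology Q F) (pre S) \<Longrightarrow>
   \<Union>K \<subseteq> AS \<and> openin (prod_topology Q F) (pre (\<Union>K))"
proof -
  assume K: "\<forall>S\<in>K. S \<subseteq> AS \<and> openin (prod_topology Q F) (pre S)"
  have "\<Union>K \<subseteq> AS" using K by blast
  moreover have "openin (prod_topology Q F) (\<Union>((\<lambda>S. pre S) ` K))"
    using K by (intro openin_Union) blast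
  ultimately show "\<Union>K \<subseteq> AS \<and> openin (prod_topology Q F) (pre (\<Union>K))"
    unfolding pre_Union by blast
qed

lemma isto: "istopology (\<lambda>U. U \<subseteq> AS \<and> openin (prod_topology Q F) (pre U))"
  unfolding istopology_def
  apply (rule conjI)
   apply (intro allI impI)
   apply (erule (1) istoA)
  apply (intro allI impI)
  apply (erule istoB)
  done

lemma openin_E: "openin E U \<longleftrightarrow> U \<subseteq> AS \<and> openin (prod_topology Q F) (pre U)"
  unfolding assoc_top_def topology_inverse'[OF isto] by (rule refl)

lemma cls_AS: "p \<in> topspace Q \<Longrightarrow> v \<in> topspace F \<Longrightarrow> cls p v \<in> AS"
  unfolding assoc_space_def by blast

lemma topspace_E: "topspace E = AS"
proof
  show "topspace E \<subseteq> AS" unfolding topspace_def using openin_E by blast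
next
  have eq: "pre AS = topspace (prod_topology Q F)" using cls_AS by auto
  have "openin E AS" unfolding openin_E eq by (intro conjI order_refl openin_topspace)
  then show "AS \<subseteq> topspace E" by (rule openin_subset)
qed

lemma slice_open:
  assumes U: "openin E U" shows "openin F {w \<in> topspace F. cls q w \<in> U}"
proof -
  have c: "continuous_map F (prod_topology Q F) (\<lambda>w. (q, w))"
    using q_Q continuous_map_id[unfolded id_def] by (intro continuous_map_pairedI) simp_all
  have "openin F {w \<in> topspace F. (q, w) \<in> pre U}"
    using openin_continuous_map_preimage[OF c] U unfolding openin_E by blast
  moreover have "{w \<in> topspace F. (q, w) \<in> pre U} = {w \<in> topspace F. cls q w \<in> U}"
    using q_Q by auto
  ultimately show ?thesis by simp
qed

lemma N_open:
  assumes Oop: "openin Q Oo" and W: "openin F W"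
  shows "openin E {cls p w | p w. p \<in> Oo \<and> w \<in> W}" (is "openin E ?N")
proof -
  have OQ: "Oo \<subseteq> topspace Q" using openin_subset[OF Oop] .
  have WF: "W \<subseteq> topspace F" using openin_subset[OF W] .
  have NA: "?N \<subseteq> AS" using OQ WF cls_AS by blast
  define G where "G b = {x \<in> topspace (prod_topology Q F). ra (fst x) (i b) \<in> Oo \<and> la b (snd x) \<in> W}" for b
  have Gopen: "openin (prod_topology Q F) (G b)" if b: "b \<in> topspace TH" for b
  proof -
    have c1: "continuous_map (prod_topology Q F) Q (\<lambda>x. ra (fst x) (i b))"
    proof -
      have "continuous_map (prod_topology Q F) (prod_topology Q TH) (\<lambda>x. (fst x, i b))"
        using iH[OF b] by (intro continuous_map_pairedI continuous_map_fst) simp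
      from continuous_map_compose[OF this ra_cont] show ?thesis by (simp add: o_def)
    qed
    have c2: "continuous_map (prod_topology Q F) F (\<lambda>x. la b (snd x))"
    proof -
      have "continuous_map (prod_topology Q F) (prod_topology TH F) (\<lambda>x. (b, snd x))"
        using b by (intro continuous_map_pairedI continuous_map_snd) simp
      from continuous_map_compose[OF this la_cont] show ?thesis by (simp add: o_def)
    qed
    have "G b = {x \<in> topspace (prod_topology Q F). ra (fst x) (i b) \<in> Oo} \<inter>
                {x \<in> topspace (prod_topology Q F). la b (snd x) \<in> W}" unfolding G_def by blast
    then show ?thesis
      using openin_continuous_map_preimage[OF c1 Oop] openin_continuous_map_preimage[OF c2 W]
      by (simp add: openin_Int)
  qed
  have "pre ?N = \<Union>(G ` topspace TH)"
  proof (rule set_eqI)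
    fix x :: "'q \<times> 'f"
    obtain p1 w1 where x: "x = (p1, w1)" by fastforce
    show "x \<in> pre ?N \<longleftrightarrow> x \<in> \<Union>(G ` topspace TH)"
    proof
      assume "x \<in> pre ?N"
      then obtain p w where pw: "p1 \<in> topspace Q" "w1 \<in> topspace F" "p \<in> Oo" "w \<in> W"
        "cls p1 w1 = cls p w" unfolding x by auto
      obtain a where a: "a \<in> topspace TH" "p1 = ra p a" "w = la a w1"
        using cls_eq[OF pw(1) subsetD[OF OQ pw(3)] pw(2) subsetD[OF WF pw(4)]] pw(5) by blast
      have "ra p1 (i a) = p" using ra_inv[OF subsetD[OF OQ pw(3)] a(1)] a(2) by simp
      then have "x \<in> G a" unfolding G_def x using pw a by simp
      then show "x \<in> \<Union>(G ` topspace TH)" using a(1) by blast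
    next
      assume "x \<in> \<Union>(G ` topspace TH)"
      then obtain b where b: "b \<in> topspace TH" "x \<in> G b" by blast
      then have pw: "p1 \<in> topspace Q" "w1 \<in> topspace F" "ra p1 (i b) \<in> Oo" "la b w1 \<in> W"
        unfolding G_def x by auto
      have "cls p1 w1 = cls (ra p1 (i b)) (la b w1)"
        using cls_eq[OF pw(1) raQ[OF pw(1) iH[OF b(1)]] pw(2) laF[OF b(1) pw(2)]]
          ra_inv'[OF pw(1) b(1)] b(1) by metis
      then have "cls p1 w1 \<in> ?N" using pw by blast
      then show "x \<in> pre ?N" using pw unfolding x by simp
    qed
  qed
  moreover have "openin (prod_topology Q F) (\<Union>(G ` topspace TH))"
    using Gopen by (intro openin_Union) blast
  ultimately show ?thesis unfolding openin_E using NA by simp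
qed

end



context bsetup begin

abbreviation "Exq \<equiv> assoc_fiber TH Q \<pi> ra F la (\<pi> q)"

lemma Ex_iff: "z \<in> Exq \<longleftrightarrow> (\<exists>w\<in>topspace F. z = cls q w)"
proof
  assume "z \<in> Exq"
  then obtain p v where pv: "p \<in> topspace Q" "\<pi> p = \<pi> q" "v \<in> topspace F" "z = cls p v"
    unfolding assoc_fiber_def by blast
  obtain a where a: "a \<in> topspace TH" "p = ra q a" using fiber_orbit[OF q_Q pv(1) pv(2)] by blast
  have "z = cls q (la a v)" using cls_shift[OF q_Q a(1) pv(3)] a(2) pv(4) by simp
  then show "\<exists>w\<in>topspace F. z = cls q w" using laF[OF a(1) pv(3)] by blast
next
  assume "\<exists>w\<in>topspace F. z = cls q w"
  then show "z \<in> Exq" unfolding assoc_fiber_def using q_Q by blast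
qed

lemma K1:
  assumes v: "v \<in> topspace F" and sa: "self_accessible E SE (cls q v)"
  shows "self_accessible F Sq v"
proof -
  define U where "U = E interior_of borbit SE (cls q v)"
  have U: "openin E U" "cls q v \<in> U" using sa unfolding U_def self_accessible_def by simp_all
  define T where "T = {w \<in> topspace F. cls q w \<in> U}"
  have T: "openin F T" unfolding T_def using slice_open[OF U(1)] .
  have vT: "v \<in> T" unfolding T_def using v U(2) by simp
  have "T \<subseteq> borbit Sq v"
  proof
    fix w assume "w \<in> T"
    then have w: "w \<in> topspace F" "cls q w \<in> U" unfolding T_def by simp_all
    have "cls q w \<in> borbit SE (cls q v)" using subsetD[OF interior_of_subset w(2)[unfolded U_def]] .
    then show "w \<in> borbit Sq v" using Bo[OF v w(1)] by simp
  qed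
  then have "T \<subseteq> F interior_of borbit Sq v" using interior_of_maximal T by blast
  then show ?thesis unfolding self_accessible_def using vT by blast
qed

lemma K2:
  assumes v: "v \<in> topspace F" and sa: "self_accessible F Sq v"
  shows "self_accessible E SE (cls q v)"
proof -
  define W where "W = F interior_of borbit Sq v"
  have W: "openin F W" "v \<in> W" using sa unfolding W_def self_accessible_def by simp_all
  have WF: "W \<subseteq> topspace F" using openin_subset[OF W(1)] .
  have Wb: "W \<subseteq> borbit Sq v" unfolding W_def by (rule interior_of_subset)
  obtain f where f: "f \<in> Sq" "f v = Some v" using subsetD[OF Wb W(2)] unfolding borbit_def by blast
  obtain a where a: "a \<in> fs" "f = amap a" using f(1) Sq_iff by blast
  have av: "la a v = v" using f(2) a(2) v by simp
  have aH: "a \<in> topspace TH" using fs_H[OF a(1)] .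
  obtain \<phi> where p: "\<phi> \<in> SQ" "\<phi> q = Some (ra q a)" using a(1) fs_iff by blast
  define Oo where "Oo = borbit SQ q"
  have Oo: "openin Q Oo" unfolding Oo_def using open_borbits q_Q by blast
  define pp where "pp = ra q (i a)"
  have ppQ: "pp \<in> topspace Q" unfolding pp_def using raQ[OF q_Q iH[OF aH]] .
  have qd: "q \<in> dom \<phi>" using p(2) by blast
  have ppd: "pp \<in> dom \<phi>" unfolding pp_def using dom_inv[OF SQ_le[OF p(1)] q_Q iH[OF aH]] qd by simp
  have "\<phi> pp = Some (ra (the (\<phi> pp)) e)" using ra_e the_Q[OF SQ_le[OF p(1)] ppd] ppd by auto
  have "\<phi> pp = Some (ra (ra q a) (i a))"
    using equiv[OF SQ_le[OF p(1)] qd iH[OF aH]] p(2) unfolding pp_def by simp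
  then have "\<phi> pp = Some q" using ra_inv[OF q_Q aH] by simp
  then have ppO: "pp \<in> Oo" unfolding Oo_def borbit_def using p(1) by blast
  define N where "N = {cls p w | p w. p \<in> Oo \<and> w \<in> W}"
  have N: "openin E N" unfolding N_def using N_open[OF Oo W(1)] .
  have "cls pp v = cls q v"
  proof -
    have "la (i a) v = v" using la_inv[OF v aH] av by simp
    then show ?thesis using cls_eq[OF ppQ q_Q v v] iH[OF aH] unfolding pp_def by metis
  qed
  then have vN: "cls q v \<in> N" unfolding N_def using ppO W(2) by blast
  have "N \<subseteq> borbit SE (cls q v)"
  proof
    fix z assume "z \<in> N"
    then obtain p' w' where pw: "z = cls p' w'" "p' \<in> Oo" "w' \<in> W" unfolding N_def by blast
    obtain \<psi> where s: "\<psi> \<in> SQ" "\<psi> p' = Some q" using pw(2) unfolding Oo_def borbit_def by blast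
    obtain g where g: "g \<in> Sq" "g w' = Some v" using subsetD[OF Wb pw(3)] unfolding borbit_def by blast
    obtain b where b: "b \<in> fs" "g = amap b" using g(1) Sq_iff by blast
    have w'F: "w' \<in> topspace F" using subsetD[OF WF pw(3)] .
    have bv: "la b w' = v" using g(2) b(2) w'F by simp
    obtain \<phi>b where pb: "\<phi>b \<in> SQ" "\<phi>b q = Some (ra q b)" using b(1) fs_iff by blast
    have c: "map_comp \<phi>b \<psi> \<in> SQ \<and> map_comp \<phi>b \<psi> p' = Some (ra q b)"
      using comp_SQ[OF s(1) pb(1) s(2) pb(2)] .
    then have pd: "p' \<in> dom (map_comp \<phi>b \<psi>)" by blast
    have "induced_E TH Q ra F la (map_comp \<phi>b \<psi>) z = Some (cls (ra q b) w')"
      using indE1[OF SQ_le[OF conjunct1[OF c]] pd w'F] c pw(1) by simp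
    also have "\<dots> = Some (cls q v)" using cls_shift[OF q_Q fs_H[OF b(1)] w'F] bv by simp
    finally show "z \<in> borbit SE (cls q v)" unfolding borbit_def using c by blast
  qed
  then have "N \<subseteq> E interior_of borbit SE (cls q v)" using interior_of_maximal N by blast
  then show ?thesis unfolding self_accessible_def using vN by blast
qed

end



context bsetup begin

abbreviation "TS D \<equiv> transitivity_set E SE D"
abbreviation "TF B \<equiv> transitivity_set F Sq B"
abbreviation "DD \<equiv> {D. control_set E SE D \<and> TS D \<inter> Exq \<noteq> {}}"

definition vD where "vD D = (SOME v. v \<in> topspace F \<and> cls q v \<in> TS D)"
definition AA where "AA D = cs F Sq (vD D)"

lemma vD_prop: assumes "D \<in> DD" shows "vD D \<in> topspace F \<and> cls q (vD D) \<in> TS D"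
proof -
  have "TS D \<inter> Exq \<noteq> {}" using assms by simp
  then obtain z where z: "z \<in> TS D \<inter> Exq" unfolding ex_in_conv[symmetric] by (elim exE)
  have "z \<in> Exq" using IntD2[OF z] .
  then obtain w where w: "w \<in> topspace F" "z = cls q w" unfolding Ex_iff by (elim bexE)
  have "cls q w \<in> TS D" using IntD1[OF z] w(2) by simp
  then have "\<exists>v. v \<in> topspace F \<and> cls q v \<in> TS D" using w(1) by (intro exI[of _ w] conjI)
  then show ?thesis unfolding vD_def by (rule someI_ex)
qed

lemma sa_vD: "D \<in> DD \<Longrightarrow> self_accessible F Sq (vD D)"
  using vD_prop K1 unfolding transitivity_set_def by blast

lemma A_cs: assumes "D \<in> DD" shows "control_set F Sq (AA D)"
  unfolding AA_def by (rule control_set_cs[THEN iffD2], intro exI[of _ "vD D"] conjI sa_vD[OF assms] refl)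

lemma vD_TSA: "D \<in> DD \<Longrightarrow> vD D \<in> TF (AA D)"
  unfolding AA_def by (intro cs_ts sa_vD)

lemma L1:
  assumes D: "D \<in> DD" and w: "w \<in> topspace F" and wt: "cls q w \<in> TS D"
  shows "w \<in> TF (AA D)"
proof -
  have Dc: "control_set E SE D" using D by simp
  have vp: "vD D \<in> topspace F" "cls q (vD D) \<in> TS D" using vD_prop[OF D] by auto
  have o1: "cls q w \<in> orbit SE (cls q (vD D))" using G3[OF strans_SE Dc vp(2) wt] .
  have o2: "cls q (vD D) \<in> orbit SE (cls q w)" using G3[OF strans_SE Dc wt vp(2)] .
  have r1: "w \<in> orbit Sq (vD D)" using R[OF vp(1) w] o1 by simp
  have r2: "vD D \<in> orbit Sq w" using R[OF w vp(1)] o2 by simp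
  have sw: "self_accessible F Sq w" using K1[OF w] wt unfolding transitivity_set_def by blast
  have "w \<in> cs F Sq (vD D)" unfolding cs_def mem_Collect_eq
    using mem_clos[OF w r1] mem_clos[OF vp(1) r2] by (intro conjI)
  then show ?thesis unfolding AA_def transitivity_set_def mem_Collect_eq using sw by (intro conjI)
qed

lemma L2:
  assumes D: "D \<in> DD" and wt: "w \<in> TF (AA D)"
  shows "w \<in> topspace F \<and> cls q w \<in> TS D"
proof -
  have Dc: "control_set E SE D" using D by simp
  have sw: "self_accessible F Sq w" using wt unfolding transitivity_set_def by blast
  have w: "w \<in> topspace F" using sa_top[OF sw] .
  have vp: "vD D \<in> topspace F" "cls q (vD D) \<in> TS D" using vD_prop[OF D] by auto
  have r1: "w \<in> orbit Sq (vD D)" using G3[OF strans_Sq A_cs[OF D] vD_TSA[OF D] wt] .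
  have r2: "vD D \<in> orbit Sq w" using G3[OF strans_Sq A_cs[OF D] wt vD_TSA[OF D]] .
  have o1: "cls q w \<in> orbit SE (cls q (vD D))" using R[OF vp(1) w] r1 by simp
  have o2: "cls q (vD D) \<in> orbit SE (cls q w)" using R[OF w vp(1)] r2 by simp
  have sz: "self_accessible E SE (cls q w)" using K2[OF w sw] .
  have Deq: "D = cs E SE (cls q (vD D))" using G2'[OF strans_SE Dc vp(2)] .
  have t1: "cls q w \<in> topspace E" unfolding topspace_E using cls_AS[OF q_Q w] .
  have t2: "cls q (vD D) \<in> topspace E" unfolding topspace_E using cls_AS[OF q_Q vp(1)] .
  have "cls q w \<in> cs E SE (cls q (vD D))" unfolding cs_def mem_Collect_eq
    using mem_clos[OF t1 o1] mem_clos[OF t2 o2] by (intro conjI)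
  then have "cls q w \<in> D" using Deq by simp
  then show ?thesis using w sz unfolding transitivity_set_def mem_Collect_eq by (intro conjI)
qed

lemma eqset: "D \<in> DD \<Longrightarrow> TS D \<inter> Exq = assoc_image TH Q ra F la q (TF (AA D))"
proof
  assume D: "D \<in> DD"
  show "TS D \<inter> Exq \<subseteq> assoc_image TH Q ra F la q (TF (AA D))"
  proof
    fix z assume z: "z \<in> TS D \<inter> Exq"
    then obtain w where w: "w \<in> topspace F" "z = cls q w" using Ex_iff by blast
    then have "w \<in> TF (AA D)" using L1[OF D w(1)] z by blast
    then show "z \<in> assoc_image TH Q ra F la q (TF (AA D))" unfolding assoc_image_def using w by blast
  qed
next
  assume D: "D \<in> DD"
  show "assoc_image TH Q ra F la q (TF (AA D)) \<subseteq> TS D \<inter> Exq"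
  proof
    fix z assume "z \<in> assoc_image TH Q ra F la q (TF (AA D))"
    then obtain w where w: "w \<in> TF (AA D)" "z = cls q w" unfolding assoc_image_def by blast
    then show "z \<in> TS D \<inter> Exq" using L2[OF D w(1)] Ex_iff by blast
  qed
qed

lemma inj: "inj_on AA DD"
proof (rule inj_onI)
  fix D D' assume D: "D \<in> DD" and D': "D' \<in> DD" and eq: "AA D = AA D'"
  have vp: "vD D \<in> topspace F" "cls q (vD D) \<in> TS D" using vD_prop[OF D] by auto
  have "vD D \<in> TF (AA D')" using vD_TSA[OF D] eq by simp
  then have "cls q (vD D) \<in> TS D'" using L2[OF D'] by blast
  then have "D' = cs E SE (cls q (vD D))" using G2'[OF strans_SE] D' by blast
  moreover have "D = cs E SE (cls q (vD D))" using G2'[OF strans_SE] D vp(2) by blast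
  ultimately show "D = D'" by simp
qed

lemma DD_I: "control_set E SE D \<Longrightarrow> z \<in> TS D \<Longrightarrow> z \<in> Exq \<Longrightarrow> D \<in> DD"
proof -
  assume a: "control_set E SE D" "z \<in> TS D" "z \<in> Exq"
  have "z \<in> TS D \<inter> Exq" using a(2,3) by (rule IntI)
  then have "TS D \<inter> Exq \<noteq> {}" by (metis empty_iff)
  then show ?thesis using a(1) by simp
qed

lemma DD_cs: "D \<in> DD \<Longrightarrow> control_set E SE D" by simp

lemma surj: "AA ` DD = {B. control_set F Sq B}"
proof
  show "AA ` DD \<subseteq> {B. control_set F Sq B}"
  proof (rule subsetI)
    fix B assume "B \<in> AA ` DD"
    then obtain D where D: "D \<in> DD" "B = AA D" by (elim imageE)
    then show "B \<in> {B. control_set F Sq B}" using A_cs[OF D(1)] by simp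
  qed
next
  show "{B. control_set F Sq B} \<subseteq> AA ` DD"
  proof (rule subsetI)
    fix B assume "B \<in> {B. control_set F Sq B}"
    then have "control_set F Sq B" by simp
    then obtain v where v: "self_accessible F Sq v" "B = cs F Sq v" unfolding control_set_cs by (elim exE conjE)
    have vF: "v \<in> topspace F" using sa_top[OF v(1)] .
    have sz: "self_accessible E SE (cls q v)" using K2[OF vF v(1)] .
    define D where "D = cs E SE (cls q v)"
    have Dc: "control_set E SE D" unfolding D_def
      by (rule control_set_cs[THEN iffD2], intro exI[of _ "cls q v"] conjI sz refl)
    have zt: "cls q v \<in> TS D" unfolding D_def using cs_ts[OF sz] .
    have "cls q v \<in> Exq" unfolding Ex_iff using vF by (intro bexI[of _ v] refl)
    then have DD: "D \<in> DD" using DD_I[OF Dc zt] by simp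
    have "v \<in> TF (AA D)" using L1[OF DD vF zt] .
    then have "AA D = cs F Sq v" using G2'[OF strans_Sq A_cs[OF DD]] by simp
    then have "B = AA D" using v(2) by simp
    then show "B \<in> AA ` DD" using DD by (intro image_eqI)
  qed
qed

lemma cle_I: "y \<in> transitivity_set Y S D \<Longrightarrow> y' \<in> transitivity_set Y S D' \<Longrightarrow> y' \<in> orbit S y
   \<Longrightarrow> control_le Y S D D'"
  unfolding control_le_def by (intro bexI)

lemma order:
  assumes D: "D \<in> DD" and D': "D' \<in> DD"
  shows "control_le E SE D D' \<longleftrightarrow> control_le F Sq (AA D) (AA D')"
proof
  assume "control_le E SE D D'"
  then obtain y y' where y: "y \<in> TS D" "y' \<in> TS D'" "y' \<in> orbit SE y"
    unfolding control_le_def by (elim bexE)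
  have vp: "vD D \<in> topspace F" "cls q (vD D) \<in> TS D" using vD_prop[OF D] by auto
  have vp': "vD D' \<in> topspace F" "cls q (vD D') \<in> TS D'" using vD_prop[OF D'] by auto
  have o1: "y \<in> orbit SE (cls q (vD D))" using G3[OF strans_SE DD_cs[OF D] vp(2) y(1)] .
  have o2: "cls q (vD D') \<in> orbit SE y'" using G3[OF strans_SE DD_cs[OF D'] y(2) vp'(2)] .
  have "cls q (vD D') \<in> orbit SE (cls q (vD D))"
    using subsetD[OF orbit_trans[OF strans_SE o1] subsetD[OF orbit_trans[OF strans_SE y(3)] o2]] .
  then have "vD D' \<in> orbit Sq (vD D)" using R[OF vp(1) vp'(1)] by simp
  then show "control_le F Sq (AA D) (AA D')"
    using cle_I[OF vD_TSA[OF D] vD_TSA[OF D']] by simp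
next
  assume "control_le F Sq (AA D) (AA D')"
  then obtain w w' where w: "w \<in> TF (AA D)" "w' \<in> TF (AA D')" "w' \<in> orbit Sq w"
    unfolding control_le_def by (elim bexE)
  have 1: "w \<in> topspace F \<and> cls q w \<in> TS D" using L2[OF D w(1)] .
  have 2: "w' \<in> topspace F \<and> cls q w' \<in> TS D'" using L2[OF D' w(2)] .
  have "cls q w' \<in> orbit SE (cls q w)" using R[of w w'] 1 2 w(3) by simp
  then show "control_le E SE D D'" using cle_I[of "cls q w" E SE D "cls q w'" D'] 1 2 by simp
qed

lemma main_loc:
  "\<exists>A :: ('q \<times> 'f) set set \<Rightarrow> 'f set.
     let E = assoc_top TH Q ra F la;
         SE = induced_E TH Q ra F la ` SQ;
         Sq = action_maps F la (fiber_semigroup TH ra SQ q);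
         Ex = assoc_fiber TH Q \<pi> ra F la (\<pi> q);
         \<D> = {D. control_set E SE D \<and> transitivity_set E SE D \<inter> Ex \<noteq> {}}
     in (\<forall>D\<in>\<D>. control_set F Sq (A D) \<and>
            transitivity_set E SE D \<inter> Ex
              = assoc_image TH Q ra F la q (transitivity_set F Sq (A D)))
        \<and> bij_betw A \<D> {B. control_set F Sq B}
        \<and> (\<forall>D\<in>\<D>. \<forall>D'\<in>\<D>. control_le E SE D D' \<longleftrightarrow> control_le F Sq (A D) (A D'))"
  unfolding Let_def
proof (rule exI[of _ AA], intro conjI)
  show "\<forall>D\<in>DD. control_set F Sq (AA D) \<and> TS D \<inter> Exq = assoc_image TH Q ra F la q (TF (AA D))"
  proof (rule ballI)
    fix D assume D: "D \<in> DD"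
    show "control_set F Sq (AA D) \<and> TS D \<inter> Exq = assoc_image TH Q ra F la q (TF (AA D))"
      using A_cs[OF D] eqset[OF D] by (intro conjI)
  qed
next
  show "bij_betw AA DD {B. control_set F Sq B}" unfolding bij_betw_def using inj surj by (intro conjI)
next
  show "\<forall>D\<in>DD. \<forall>D'\<in>DD. control_le E SE D D' \<longleftrightarrow> control_le F Sq (AA D) (AA D')"
    using order by (intro ballI)
qed

end

theorem mainTheorem12:
  fixes X :: "'x topology" and TH :: "'h topology"
    and m :: "'h \<Rightarrow> 'h \<Rightarrow> 'h" and e :: 'h and i :: "'h \<Rightarrow> 'h"
    and Q :: "'q topology" and \<pi> :: "'q \<Rightarrow> 'x" and ra :: "'q \<Rightarrow> 'h \<Rightarrow> 'q"
    and F :: "'f topology" and la :: "'h \<Rightarrow> 'f \<Rightarrow> 'f"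
    and SQ :: "('q \<rightharpoonup> 'q) set"
    and C :: "'x set" and q :: 'q
  assumes princ: "principal_bundle X TH m e i Q \<pi> ra"
    and action: "continuous_left_action TH m e F la"
    and open_act: "open_action TH F la"
    and trans_act: "transitive_action TH F la"
    and SQ_semigroup: "local_semigroup Q SQ"
    and SQ_endo: "\<forall>\<phi>\<in>SQ. local_endo X TH Q \<pi> ra \<phi>"
    and open_borbits: "\<forall>p\<in>topspace Q. openin Q (borbit SQ p)"
    and C_cs: "control_set X (induced_X \<pi> ` SQ) C"
    and q_Q: "q \<in> topspace Q"
    and q_C0: "\<pi> q \<in> transitivity_set X (induced_X \<pi> ` SQ) C"
  shows "\<exists>A :: ('q \<times> 'f) set set \<Rightarrow> 'f set.
     let E = assoc_top TH Q ra F la;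
         SE = induced_E TH Q ra F la ` SQ;
         Sq = action_maps F la (fiber_semigroup TH ra SQ q);
         Ex = assoc_fiber TH Q \<pi> ra F la (\<pi> q);
         \<D> = {D. control_set E SE D \<and> transitivity_set E SE D \<inter> Ex \<noteq> {}}
     in (\<forall>D\<in>\<D>. control_set F Sq (A D) \<and>
            transitivity_set E SE D \<inter> Ex
              = assoc_image TH Q ra F la q (transitivity_set F Sq (A D)))
        \<and> bij_betw A \<D> {B. control_set F Sq B}
        \<and> (\<forall>D\<in>\<D>. \<forall>D'\<in>\<D>. control_le E SE D D' \<longleftrightarrow> control_le F Sq (A D) (A D'))"
  proof -
  interpret bsetup X TH m e i Q \<pi> ra F la SQ q
    using princ action SQ_semigroup SQ_endo open_borbits q_Q by (unfold_locales)
  show ?thesis by (rule main_loc)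
qed

end
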